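(* Let $(X,d_X)$ be a compact metric space, let $0<\gamma<1$, let $(\phi_j)_{j\in\mathbb{N}}$ be maps $\phi_j:X\to X$ with $d_X(\phi_j(x_1),\phi_j(x_2))\le \gamma\, d_X(x_1,x_2)$ for all $j$ and $x_1,x_2\in X$, and let $(q_j)_{j\in\mathbb{N}}$ be real numbers with $q_j\le 0$ and $\sup_j q_j=0$. Let $\nu\in I(X)$ be the unique idempotent probability with $M_{\phi,q}(\nu)=\nu$, where $M_{\phi,q}(\mu)(f):=\sup_{j\in\mathbb{N}}(q_j+\mu(f\circ\phi_j))$. For each $n\in\mathbb{N}$ let $\alpha_n:=\max_{1\le j\le n} q_j$, $\tilde q_j:=q_j-\alpha_n$ for $1\le j\le n$, $M_{\phi,\tilde q,n}(\mu)(f):=\max_{1\le j\le n}(\tilde q_j+\mu(f\circ\phi_j))$, and let $\mu_n\in I(X)$ be the unique idempotent probability with $M_{\phi,\tilde q,n}(\mu_n)=\mu_n$. Let $(\mu_{n_i})_{i\in\mathbb{N}}$ be any subsequence that converges in the topology $\tau_p$. Then $\mu_{n_i}\to\nu$ in $\tau_p$; in particular the sequence $(\mu_n)$ converges in the $\tau_p$ topology (to $\nu$).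
   Context: $C(X,\mathbb{R})$ is the set of continuous real functions on $X$. $I(X)$ is the set of functionals $m:C(X,\mathbb{R})\to\mathbb{R}$ with $m(a+f)=a+m(f)$ for $a\in\mathbb{R}$, $m(\max(f,g))=\max(m(f),m(g))$, and $m(0)=0$. The topology $\tau_p$ on $I(X)$ is that of pointwise convergence: $\mu_k\to\mu$ iff $\mu_k(f)\to\mu(f)$ for every $f\in C(X,\mathbb{R})$. The existence and uniqueness of $\nu$ and of each $\mu_n$ (fixed points of the respective contractive operators) are part of the setting. *)

theory Defs
  imports "HOL-Analysis.Analysis"
begin

text \<open>The compact metric space X is the whole of a type 'a with compact UNIV;
  C(X,R) is the bcontfun type over real.\<close>

definition maxC :: "('a::topological_space \<Rightarrow>\<^sub>C real) \<Rightarrow> ('a \<Rightarrow>\<^sub>C real) \<Rightarrow> ('a \<Rightarrow>\<^sub>C real)" where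
  "maxC f g = Bcontfun (\<lambda>x. max (apply_bcontfun f x) (apply_bcontfun g x))"

definition compC :: "('a::topological_space \<Rightarrow>\<^sub>C real) \<Rightarrow> ('a \<Rightarrow> 'a) \<Rightarrow> ('a \<Rightarrow>\<^sub>C real)" where
  "compC f \<phi> = Bcontfun (apply_bcontfun f \<circ> \<phi>)"

definition idem_prob :: "(('a::topological_space \<Rightarrow>\<^sub>C real) \<Rightarrow> real) \<Rightarrow> bool" where
  "idem_prob m \<longleftrightarrow>
     (\<forall>a f. m (const_bcontfun a + f) = a + m f) \<and>
     (\<forall>f g. m (maxC f g) = max (m f) (m g)) \<and>
     m 0 = 0"

definition M_inf :: "(nat \<Rightarrow> real) \<Rightarrow> (nat \<Rightarrow> 'a \<Rightarrow> 'a)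
     \<Rightarrow> (('a::topological_space \<Rightarrow>\<^sub>C real) \<Rightarrow> real) \<Rightarrow> (('a \<Rightarrow>\<^sub>C real) \<Rightarrow> real)" where
  "M_inf q \<phi> \<mu> = (\<lambda>f. SUP j\<in>{1..}. q j + \<mu> (compC f (\<phi> j)))"

definition alpha :: "(nat \<Rightarrow> real) \<Rightarrow> nat \<Rightarrow> real" where
  "alpha q n = (MAX j\<in>{1..n}. q j)"

definition M_fin :: "(nat \<Rightarrow> real) \<Rightarrow> (nat \<Rightarrow> 'a \<Rightarrow> 'a) \<Rightarrow> nat
     \<Rightarrow> (('a::topological_space \<Rightarrow>\<^sub>C real) \<Rightarrow> real) \<Rightarrow> (('a \<Rightarrow>\<^sub>C real) \<Rightarrow> real)" where
  "M_fin q \<phi> n \<mu> = (\<lambda>f. MAX j\<in>{1..n}. (q j - alpha q n) + \<mu> (compC f (\<phi> j)))"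

end

theory Submission imports Defs begin

lemma idem_const: "idem_prob m \<Longrightarrow> m (const_bcontfun c) = c"
  unfolding idem_prob_def by (metis add.right_neutral)

lemma idem_mono:
  assumes "idem_prob m" "\<And>x. apply_bcontfun f x \<le> apply_bcontfun g x"
  shows "m f \<le> m g"
proof -
  have "maxC f g = g" unfolding maxC_def
  proof -
    have "(\<lambda>x. max (apply_bcontfun f x) (apply_bcontfun g x)) = apply_bcontfun g"
      using assms(2) by (auto simp: max_def)
    then show "Bcontfun (\<lambda>x. max (apply_bcontfun f x) (apply_bcontfun g x)) = g"
      by (simp add: apply_bcontfun_inverse)
  qed
  then have "m g = max (m f) (m g)" using assms(1) unfolding idem_prob_def by metis
  then show ?thesis by (metis max.cobounded1)
qed

lemma idem_upper:
  assumes "idem_prob m" "\<And>x. apply_bcontfun g x \<le> c"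
  shows "m g \<le> c"
  using idem_mono[OF assms(1), of g "const_bcontfun c"] assms idem_const[OF assms(1)]
  by (simp add: const_bcontfun.rep_eq)

lemma idem_lower:
  assumes "idem_prob m" "\<And>x. c \<le> apply_bcontfun g x"
  shows "c \<le> m g"
  using idem_mono[OF assms(1), of "const_bcontfun c" g] assms idem_const[OF assms(1)]
  by (simp add: const_bcontfun.rep_eq)

lemma compC_apply:
  assumes "continuous_on UNIV \<psi>"
  shows "apply_bcontfun (compC f \<psi>) x = apply_bcontfun f (\<psi> x)"
proof -
  have "(apply_bcontfun f \<circ> \<psi>) \<in> bcontfun"
    unfolding bcontfun_def
  proof safe
    show "continuous_on UNIV (apply_bcontfun f \<circ> \<psi>)"
      by (rule continuous_on_compose[OF assms]) simp
    have "range (apply_bcontfun f \<circ> \<psi>) \<subseteq> range (apply_bcontfun f)" by auto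
    then show "bounded (range (apply_bcontfun f \<circ> \<psi>))"
      using bounded_subset bounded_apply_bcontfun by blast
  qed
  then show ?thesis unfolding compC_def by (simp add: Bcontfun_inverse)
qed

lemma contr_cont:
  assumes "\<And>x1 x2. dist (\<psi> x1) (\<psi> x2) \<le> \<gamma> * dist x1 x2" "0 < \<gamma>"
  shows "continuous_on UNIV \<psi>"
proof -
  have "\<gamma>-lipschitz_on UNIV \<psi>" using assms by (intro lipschitz_onI) auto
  then show ?thesis using lipschitz_on_continuous_on by blast
qed

lemma max_diff:
  fixes a b :: "nat \<Rightarrow> real"
  assumes "finite A" "A \<noteq> {}" "\<And>j. j\<in>A \<Longrightarrow> \<bar>a j - b j\<bar> \<le> e"
  shows "\<bar>(MAX j\<in>A. a j) - (MAX j\<in>A. b j)\<bar> \<le> e"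
proof -
  have "(MAX j\<in>A. a j) \<in> a ` A" "(MAX j\<in>A. b j) \<in> b ` A" using assms by simp_all
  then obtain j1 j2 where j1: "j1 \<in> A" "(MAX j\<in>A. a j) = a j1"
    and j2: "j2 \<in> A" "(MAX j\<in>A. b j) = b j2" by (metis imageE)
  have "b j1 \<le> (MAX j\<in>A. b j)" "a j2 \<le> (MAX j\<in>A. a j)"
    using j1(1) j2(1) assms(1) by (auto intro!: Max_ge)
  then show ?thesis using j1 j2 assms(3)[of j1] assms(3)[of j2] by linarith
qed


definition Mp :: "(nat \<Rightarrow> real) \<Rightarrow> (nat \<Rightarrow> 'a \<Rightarrow> 'a) \<Rightarrow> nat
     \<Rightarrow> (('a::topological_space \<Rightarrow>\<^sub>C real) \<Rightarrow> real) \<Rightarrow> (('a \<Rightarrow>\<^sub>C real) \<Rightarrow> real)" where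
  "Mp q \<phi> n \<mu> = (\<lambda>f. MAX j\<in>{1..n}. q j + \<mu> (compC f (\<phi> j)))"

lemma shift:
  assumes "n \<ge> 1"
  shows "(M_fin q \<phi> n ^^ k) m f = (Mp q \<phi> n ^^ k) m f - real k * alpha q n"
proof (induction k arbitrary: f)
  case 0
  then show ?case by simp
next
  case (Suc k)
  have "(M_fin q \<phi> n ^^ Suc k) m f
      = (MAX j\<in>{1..n}. (q j + (Mp q \<phi> n ^^ k) m (compC f (\<phi> j))) + (- real (Suc k) * alpha q n))"
    by (simp add: M_fin_def Suc algebra_simps)
  also have "\<dots> = (MAX j\<in>{1..n}. q j + (Mp q \<phi> n ^^ k) m (compC f (\<phi> j))) + (- real (Suc k) * alpha q n)"
    by (rule Max_add_commute) (use assms in auto)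
  also have "\<dots> = (Mp q \<phi> n ^^ Suc k) m f - real (Suc k) * alpha q n"
    unfolding Mp_def by (simp add: ring_distribs)
  finally show ?case .
qed

lemma M_fin_apply: "M_fin q \<phi> n \<mu> f = (MAX j\<in>{1..n}. (q j - alpha q n) + \<mu> (compC f (\<phi> j)))"
  by (simp add: M_fin_def)

lemma Mp_apply: "Mp q \<phi> n \<mu> f = (MAX j\<in>{1..n}. q j + \<mu> (compC f (\<phi> j)))"
  by (simp add: Mp_def)

lemma fixpt_iter: "M m = m \<Longrightarrow> (M ^^ k) m = m"
  by (induction k) auto

context
  fixes \<phi> :: "nat \<Rightarrow> 'a::metric_space \<Rightarrow> 'a" and \<gamma> :: real and q :: "nat \<Rightarrow> real"
  assumes contr: "\<And>j x1 x2. j \<ge> 1 \<Longrightarrow> dist (\<phi> j x1) (\<phi> j x2) \<le> \<gamma> * dist x1 x2"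
    and gpos: "0 < \<gamma>"
begin

lemma cj: "j \<ge> 1 \<Longrightarrow> apply_bcontfun (compC f (\<phi> j)) x = apply_bcontfun f (\<phi> j x)"
  by (rule compC_apply, rule contr_cont[OF _ gpos], rule contr)

lemma contraction:
  assumes m: "idem_prob m" and m': "idem_prob m'" and n: "n \<ge> 1"
    and B: "\<And>x y::'a. dist x y \<le> B"
  shows "(\<And>x y. dist x y \<le> B * \<gamma>^k \<Longrightarrow> \<bar>apply_bcontfun g x - apply_bcontfun g y\<bar> \<le> e)
     \<Longrightarrow> \<bar>(M_fin q \<phi> n ^^ k) m g - (M_fin q \<phi> n ^^ k) m' g\<bar> \<le> 2 * e"
proof (induction k arbitrary: g)
  case 0
  define x0 :: 'a where "x0 = undefined"
  have h: "\<And>x. \<bar>apply_bcontfun g x - apply_bcontfun g x0\<bar> \<le> e" proof -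
    fix x
    have "dist x x0 \<le> B * \<gamma> ^ 0" using B[of x x0] by simp
    then show "\<bar>apply_bcontfun g x - apply_bcontfun g x0\<bar> \<le> e" by (rule 0)
  qed
  have u: "apply_bcontfun g x \<le> apply_bcontfun g x0 + e" "apply_bcontfun g x0 - e \<le> apply_bcontfun g x" for x
    using h[of x] by arith+
  have "m g \<le> apply_bcontfun g x0 + e" "apply_bcontfun g x0 - e \<le> m g"
    "m' g \<le> apply_bcontfun g x0 + e" "apply_bcontfun g x0 - e \<le> m' g"
    by (rule idem_upper[OF m] idem_lower[OF m] idem_upper[OF m'] idem_lower[OF m'], rule u)+
  then show ?case by simp
next
  case (Suc k)
  have "\<bar>(M_fin q \<phi> n ^^ k) m (compC g (\<phi> j)) - (M_fin q \<phi> n ^^ k) m' (compC g (\<phi> j))\<bar> \<le> 2 * e"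
    if j: "j \<in> {1..n}" for j
  proof (rule Suc.IH)
    fix x y :: 'a assume "dist x y \<le> B * \<gamma> ^ k"
    then have "dist (\<phi> j x) (\<phi> j y) \<le> B * \<gamma> ^ Suc k"
    proof -
      have "dist (\<phi> j x) (\<phi> j y) \<le> \<gamma> * dist x y" using contr[of j x y] j by simp
      also have "\<dots> \<le> \<gamma> * (B * \<gamma> ^ k)"
        by (rule mult_left_mono) (use \<open>dist x y \<le> B * \<gamma> ^ k\<close> gpos in auto)
      finally show ?thesis by (simp add: algebra_simps)
    qed
    then show "\<bar>apply_bcontfun (compC g (\<phi> j)) x - apply_bcontfun (compC g (\<phi> j)) y\<bar> \<le> e"
      using Suc.prems cj j by auto
  qed
  then have "\<bar>(MAX j\<in>{1..n}. (q j - alpha q n) + (M_fin q \<phi> n ^^ k) m (compC g (\<phi> j)))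
     - (MAX j\<in>{1..n}. (q j - alpha q n) + (M_fin q \<phi> n ^^ k) m' (compC g (\<phi> j)))\<bar> \<le> 2 * e"
    using n by (intro max_diff) auto
  then show ?case
    by (simp only: funpow.simps o_apply M_fin_apply[of q \<phi> n "(M_fin q \<phi> n ^^ k) m"]
        M_fin_apply[of q \<phi> n "(M_fin q \<phi> n ^^ k) m'"])
qed

end

lemma Max_le_image:
  fixes f :: "nat \<Rightarrow> real"
  shows "A \<noteq> {} \<Longrightarrow> finite A \<Longrightarrow> (\<And>j. j\<in>A \<Longrightarrow> f j \<le> x) \<Longrightarrow> (MAX j\<in>A. f j) \<le> x"
  by (simp add: Max_le_iff)

context
  fixes \<phi> :: "nat \<Rightarrow> 'a::metric_space \<Rightarrow> 'a" and \<gamma> :: real and q :: "nat \<Rightarrow> real"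
    and \<nu> :: "('a \<Rightarrow>\<^sub>C real) \<Rightarrow> real"
  assumes contr: "\<And>j x1 x2. j \<ge> 1 \<Longrightarrow> dist (\<phi> j x1) (\<phi> j x2) \<le> \<gamma> * dist x1 x2"
    and gpos: "0 < \<gamma>"
    and q_nonpos: "\<And>j. j \<ge> 1 \<Longrightarrow> q j \<le> 0"
    and \<nu>: "idem_prob \<nu>" "M_inf q \<phi> \<nu> = \<nu>"
begin

lemma nu_bdd: "bdd_above ((\<lambda>j. q j + \<nu> (compC f (\<phi> j))) ` {1..})"
proof (rule bdd_aboveI2)
  fix j :: nat assume j: "j \<in> {1..}"
  have "\<nu> (compC f (\<phi> j)) \<le> norm f"
  proof (rule idem_upper[OF \<nu>(1)])
    fix x
    have "apply_bcontfun (compC f (\<phi> j)) x = apply_bcontfun f (\<phi> j x)"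
      using cj[OF contr gpos] j by auto
    also have "\<dots> \<le> norm f" using norm_bounded[of f "\<phi> j x"] by simp
    finally show "apply_bcontfun (compC f (\<phi> j)) x \<le> norm f" .
  qed
  then show "q j + \<nu> (compC f (\<phi> j)) \<le> norm f" using q_nonpos[of j] j by simp
qed

lemma nu_eq: "\<nu> f = (SUP j\<in>{1..}. q j + \<nu> (compC f (\<phi> j)))"
  using fun_cong[OF \<nu>(2), of f] by (simp add: M_inf_def)

lemma nu_ge: "j \<ge> 1 \<Longrightarrow> q j + \<nu> (compC f (\<phi> j)) \<le> \<nu> f"
  unfolding nu_eq[of f] by (rule cSUP_upper[OF _ nu_bdd]) simp

lemma iterA: "n \<ge> 1 \<Longrightarrow> (Mp q \<phi> n ^^ k) \<nu> f \<le> \<nu> f"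
proof (induction k arbitrary: f)
  case 0 then show ?case by simp
next
  case (Suc k)
  have "(MAX j\<in>{1..n}. q j + (Mp q \<phi> n ^^ k) \<nu> (compC f (\<phi> j))) \<le> \<nu> f"
  proof (rule Max_le_image)
    show "{1..n} \<noteq> {}" using Suc.prems by simp
  next
    show "finite {1..n}" by simp
  next
    fix j assume "j \<in> {1..n}"
    then have j: "1 \<le> j" "j \<le> n" by auto
    have "q j + (Mp q \<phi> n ^^ k) \<nu> (compC f (\<phi> j)) \<le> q j + \<nu> (compC f (\<phi> j))"
      using Suc.IH Suc.prems by simp
    also have "\<dots> \<le> \<nu> f" using nu_ge j by simp
    finally show "q j + (Mp q \<phi> n ^^ k) \<nu> (compC f (\<phi> j)) \<le> \<nu> f" .
  qed
  then show ?case
    by (simp only: funpow.simps o_apply Mp_apply[of q \<phi> n "(Mp q \<phi> n ^^ k) \<nu>"])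
qed

lemma iterB: "n \<ge> 1 \<Longrightarrow> n \<le> n' \<Longrightarrow> (Mp q \<phi> n ^^ k) \<nu> f \<le> (Mp q \<phi> n' ^^ k) \<nu> f"
proof (induction k arbitrary: f)
  case 0 then show ?case by simp
next
  case (Suc k)
  have "(MAX j\<in>{1..n}. q j + (Mp q \<phi> n ^^ k) \<nu> (compC f (\<phi> j)))
     \<le> (MAX j\<in>{1..n'}. q j + (Mp q \<phi> n' ^^ k) \<nu> (compC f (\<phi> j)))"
  proof (rule Max_le_image)
    show "{1..n} \<noteq> {}" using Suc.prems by simp
  next
    show "finite {1..n}" by simp
  next
    fix j assume "j \<in> {1..n}"
    then have j: "1 \<le> j" "j \<le> n" by auto
    have "q j + (Mp q \<phi> n ^^ k) \<nu> (compC f (\<phi> j)) \<le> q j + (Mp q \<phi> n' ^^ k) \<nu> (compC f (\<phi> j))"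
      using Suc.IH Suc.prems by simp
    also have "\<dots> \<le> (MAX j\<in>{1..n'}. q j + (Mp q \<phi> n' ^^ k) \<nu> (compC f (\<phi> j)))"
      by (rule Max_ge) (use j Suc.prems in auto)
    finally show "q j + (Mp q \<phi> n ^^ k) \<nu> (compC f (\<phi> j))
       \<le> (MAX j\<in>{1..n'}. q j + (Mp q \<phi> n' ^^ k) \<nu> (compC f (\<phi> j)))" .
  qed
  then show ?case
    by (simp only: funpow.simps o_apply Mp_apply[of q \<phi> n "(Mp q \<phi> n ^^ k) \<nu>"]
          Mp_apply[of q \<phi> n' "(Mp q \<phi> n' ^^ k) \<nu>"])
qed

lemma iterC: "e > 0 \<Longrightarrow> \<exists>N\<ge>1. \<nu> f - e < (Mp q \<phi> N ^^ k) \<nu> f"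
proof (induction k arbitrary: f e)
  case 0 then show ?case by (intro exI[of _ 1]) simp
next
  case (Suc k)
  have "\<nu> f - e/2 < (SUP j\<in>{1..}. q j + \<nu> (compC f (\<phi> j)))"
    using Suc.prems nu_eq[of f] by simp
  then obtain j where j: "j \<ge> 1" "\<nu> f - e/2 < q j + \<nu> (compC f (\<phi> j))"
    using less_cSUP_iff[OF _ nu_bdd] by force
  obtain N where N: "N \<ge> 1" "\<nu> (compC f (\<phi> j)) - e/2 < (Mp q \<phi> N ^^ k) \<nu> (compC f (\<phi> j))"
    using Suc.IH[of "e/2" "compC f (\<phi> j)"] Suc.prems by auto
  define N' where "N' = max N j"
  have "(Mp q \<phi> N ^^ k) \<nu> (compC f (\<phi> j)) \<le> (Mp q \<phi> N' ^^ k) \<nu> (compC f (\<phi> j))"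
    by (rule iterB) (use N N'_def in auto)
  also have "q j + (Mp q \<phi> N' ^^ k) \<nu> (compC f (\<phi> j))
      \<le> (MAX j\<in>{1..N'}. q j + (Mp q \<phi> N' ^^ k) \<nu> (compC f (\<phi> j)))"
    by (rule Max_ge) (use j N'_def in auto)
  also have "\<dots> = (Mp q \<phi> N' ^^ Suc k) \<nu> f"
    by (simp only: funpow.simps o_apply Mp_apply[of q \<phi> N' "(Mp q \<phi> N' ^^ k) \<nu>"])
  finally show ?case using j N N'_def by (intro exI[of _ N']) auto
qed

end

lemma alpha_conv:
  fixes q :: "nat \<Rightarrow> real"
  assumes q_nonpos: "\<And>j. j \<ge> 1 \<Longrightarrow> q j \<le> 0" and q_sup: "(SUP j\<in>{1..}. q j) = 0" and e: "e > 0"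
  shows "\<exists>N. \<forall>n\<ge>N. \<bar>alpha q n\<bar> < e"
proof -
  have bdd: "bdd_above (q ` {1..})" using q_nonpos by (intro bdd_aboveI2) auto
  have "-e < (SUP j\<in>{1..}. q j)" using q_sup e by simp
  then obtain j where j: "j \<ge> 1" "-e < q j" using less_cSUP_iff[OF _ bdd] by force
  have "\<bar>alpha q n\<bar> < e" if n: "n \<ge> j" for n
  proof -
    have "alpha q n \<le> 0" unfolding alpha_def using j n q_nonpos by (subst Max_le_iff) auto
    moreover have "q j \<le> alpha q n" unfolding alpha_def by (rule Max_ge) (use j n in auto)
    ultimately show ?thesis using j by linarith
  qed
  then show ?thesis by blast
qed

theorem theorem3p4:
  fixes \<phi> :: "nat \<Rightarrow> 'a::metric_space \<Rightarrow> 'a"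
    and q :: "nat \<Rightarrow> real" and \<gamma> :: real
    and \<nu> :: "('a \<Rightarrow>\<^sub>C real) \<Rightarrow> real"
    and \<mu> :: "nat \<Rightarrow> ('a \<Rightarrow>\<^sub>C real) \<Rightarrow> real"
    and r :: "nat \<Rightarrow> nat" and \<mu>\<^sub>0 :: "('a \<Rightarrow>\<^sub>C real) \<Rightarrow> real"
  assumes X_compact: "compact (UNIV :: 'a set)"
    and \<gamma>: "0 < \<gamma>" "\<gamma> < 1"
    and contr: "\<And>j x1 x2. j \<ge> 1 \<Longrightarrow> dist (\<phi> j x1) (\<phi> j x2) \<le> \<gamma> * dist x1 x2"
    and q_nonpos: "\<And>j. j \<ge> 1 \<Longrightarrow> q j \<le> 0"
    and q_sup: "(SUP j\<in>{1..}. q j) = 0"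
    and \<nu>: "idem_prob \<nu>" "M_inf q \<phi> \<nu> = \<nu>"
    and \<mu>: "\<And>n. n \<ge> 1 \<Longrightarrow> idem_prob (\<mu> n) \<and> M_fin q \<phi> n (\<mu> n) = \<mu> n"
    and r: "strict_mono r"
    and \<mu>\<^sub>0: "idem_prob \<mu>\<^sub>0"
    and conv: "\<And>f. (\<lambda>i. \<mu> (r i) f) \<longlonglongrightarrow> \<mu>\<^sub>0 f"
  shows "(\<forall>f. (\<lambda>i. \<mu> (r i) f) \<longlonglongrightarrow> \<nu> f) \<and> (\<forall>f. (\<lambda>n. \<mu> n f) \<longlonglongrightarrow> \<nu> f)"
proof -
  have all: "(\<lambda>n. \<mu> n f) \<longlonglongrightarrow> \<nu> f" for f
  proof (rule LIMSEQ_I)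
    fix rr :: real assume rr: "0 < rr"
    define \<epsilon> where "\<epsilon> = rr / 5"
    have \<epsilon>: "\<epsilon> > 0" using rr by (simp add: \<epsilon>_def)
    have uc: "uniformly_continuous_on UNIV (apply_bcontfun f)"
      by (rule compact_uniformly_continuous[OF _ X_compact]) simp
    then obtain \<delta> where \<delta>: "\<delta> > 0"
      and \<delta>f: "\<And>x y. dist x y < \<delta> \<Longrightarrow> dist (apply_bcontfun f x) (apply_bcontfun f y) < \<epsilon>"
      unfolding uniformly_continuous_on_def using \<epsilon> by (metis UNIV_I)
    obtain B0 where B0: "\<forall>x\<in>(UNIV::'a set). \<forall>y\<in>(UNIV::'a set). dist x y \<le> B0"
      using compact_imp_bounded[OF X_compact] unfolding bounded_two_points by blast
    define B where "B = \<bar>B0\<bar> + 1"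
    have Bpos: "B > 0" by (simp add: B_def)
    have B: "\<And>x y::'a. dist x y \<le> B" proof -
      fix x y :: 'a
      have "dist x y \<le> B0" using B0 by blast
      then show "dist x y \<le> B" unfolding B_def by linarith
    qed
    obtain k where k: "\<gamma> ^ k < \<delta> / B" using real_arch_pow_inv[of "\<delta> / B" \<gamma>] \<delta> Bpos \<gamma> by auto
    then have Bk: "B * \<gamma> ^ k < \<delta>" using Bpos by (simp add: field_simps)
    have c: "\<bar>\<mu> n f - (M_fin q \<phi> n ^^ k) \<nu> f\<bar> \<le> 2 * \<epsilon>" if n: "n \<ge> 1" for n
    proof -
      have "(M_fin q \<phi> n ^^ k) (\<mu> n) = \<mu> n" using \<mu>[OF n] by (intro fixpt_iter) simp
      moreover have "\<bar>(M_fin q \<phi> n ^^ k) (\<mu> n) f - (M_fin q \<phi> n ^^ k) \<nu> f\<bar> \<le> 2 * \<epsilon>"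
      proof (rule contraction[OF contr \<gamma>(1) _ \<nu>(1) n B])
        show "idem_prob (\<mu> n)" using \<mu>[OF n] by simp
      next
        fix x y :: 'a assume "dist x y \<le> B * \<gamma> ^ k"
        then have "dist x y < \<delta>" using Bk by simp
        then show "\<bar>apply_bcontfun f x - apply_bcontfun f y\<bar> \<le> \<epsilon>"
          using \<delta>f[of x y] by (simp add: dist_real_def)
      qed
      ultimately show ?thesis by simp
    qed
    obtain N1 where N1: "N1 \<ge> 1" "\<nu> f - \<epsilon> < (Mp q \<phi> N1 ^^ k) \<nu> f"
      using iterC[OF contr \<gamma>(1) q_nonpos \<nu>(1) \<nu>(2) \<epsilon>] by blast
    have "\<epsilon> / (real k + 1) > 0" using \<epsilon> by simp
    then obtain N2 where N2: "\<And>n. n \<ge> N2 \<Longrightarrow> \<bar>alpha q n\<bar> < \<epsilon> / (real k + 1)"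
      using alpha_conv[OF q_nonpos q_sup] by blast
    have "norm (\<mu> n f - \<nu> f) < rr" if n: "n \<ge> max N1 N2" for n
    proof -
      have n1: "n \<ge> 1" using n N1 by simp
      have s: "(M_fin q \<phi> n ^^ k) \<nu> f = (Mp q \<phi> n ^^ k) \<nu> f - real k * alpha q n"
        by (rule shift[OF n1])
      have a: "(Mp q \<phi> n ^^ k) \<nu> f \<le> \<nu> f"
        by (rule iterA[OF contr \<gamma>(1) q_nonpos \<nu>(1) \<nu>(2) n1])
      have b: "(Mp q \<phi> N1 ^^ k) \<nu> f \<le> (Mp q \<phi> n ^^ k) \<nu> f"
        by (rule iterB[OF contr \<gamma>(1) q_nonpos \<nu>(1) \<nu>(2)]) (use N1 n in auto)
      have al: "\<bar>alpha q n\<bar> < \<epsilon> / (real k + 1)" using N2 n by simp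
      have "\<bar>real k * alpha q n\<bar> = real k * \<bar>alpha q n\<bar>" by (simp add: abs_mult)
      also have "\<dots> \<le> (real k + 1) * \<bar>alpha q n\<bar>" by (simp add: mult_right_mono)
      also have "\<dots> \<le> (real k + 1) * (\<epsilon> / (real k + 1))"
        using al by (intro mult_left_mono) auto
      also have "\<dots> = \<epsilon>" by simp
      finally have ka: "\<bar>real k * alpha q n\<bar> \<le> \<epsilon>" .
      have "\<bar>\<mu> n f - \<nu> f\<bar> \<le> 4 * \<epsilon>" using c[OF n1] s a b N1 ka by linarith
      then show ?thesis using \<epsilon> \<epsilon>_def by simp
    qed
    then show "\<exists>no. \<forall>n\<ge>no. norm (\<mu> n f - \<nu> f) < rr" by blast
  qed
  have sub: "(\<lambda>i. \<mu> (r i) f) \<longlonglongrightarrow> \<nu> f" for f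
    using LIMSEQ_subseq_LIMSEQ[OF all[of f] r] by (simp add: o_def)
  show ?thesis using all sub by blast
qed

end
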